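(* Let $(\epsilon_n)$ be a sequence of positive numbers with $\epsilon_n=O(n^{-\tau})$ for some $\tau\in(0,1)$. Then for every $\mu\in\mathcal{P}(\mathbb{X})$ with $H(\mu)<\infty$, $$\lim_{n\to\infty}H(\hat\mu_{n,\epsilon_n})=H(\mu),\qquad\mathbb{P}_\mu\text{-a.s.}$$
   Context: $\mathbb{X}$ is a countably infinite set; for a probability $\mu$ on $\mathbb{X}$, $f_\mu(x)=\mu(\{x\})$, $A_\mu=\{x:f_\mu(x)>0\}$, and $H(\mu)=-\sum_{x\in A_\mu}f_\mu(x)\log f_\mu(x)$ ($\log$ to a fixed base $b>1$). Given i.i.d. $X_1,X_2,\dots\sim\mu$ with law $\mathbb{P}_\mu$, $\hat\mu_n(A)=\frac1n\sum_{k=1}^n\mathbb{1}_A(X_k)$ is the empirical measure. For $\epsilon>0$ the data-driven set is $\Gamma_\epsilon=\{x\in\mathbb{X}:\hat\mu_n(\{x\})\ge\epsilon\}$ and the data-driven estimate is the conditional empirical measure $\hat\mu_{n,\epsilon}=\hat\mu_n(\cdot\mid\Gamma_\epsilon)$, i.e. $\hat\mu_{n,\epsilon}(A)=\hat\mu_n(A\cap\Gamma_\epsilon)/\hat\mu_n(\Gamma_\epsilon)$ (defined arbitrarily when $\Gamma_\epsilon=\emptyset$). *)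

theory Defs
  imports "HOL-Probability.Probability" "HOL-Library.Landau_Symbols"
begin

definition entropy_fun :: "real \<Rightarrow> ('a \<Rightarrow> real) \<Rightarrow> real" where
  "entropy_fun b f = - infsum (\<lambda>x. f x * log b (f x)) {x. f x > 0}"

definition emp :: "nat \<Rightarrow> (nat \<Rightarrow> 'a) \<Rightarrow> 'a \<Rightarrow> real" where
  "emp n w x = real (card {k \<in> {..<n}. w k = x}) / real n"

definition Gam :: "nat \<Rightarrow> (nat \<Rightarrow> 'a) \<Rightarrow> real \<Rightarrow> 'a set" where
  "Gam n w eps = {x. emp n w x \<ge> eps}"

definition cond_emp :: "nat \<Rightarrow> (nat \<Rightarrow> 'a) \<Rightarrow> real \<Rightarrow> 'a \<Rightarrow> real" where
  "cond_emp n w eps x =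
     (if x \<in> Gam n w eps then emp n w x / (\<Sum>y\<in>Gam n w eps. emp n w y) else 0)"

end

theory Submission
  imports Defs
begin


locale iidseq =
  fixes \<mu> :: "'a::countable pmf"
begin

abbreviation "M \<equiv> (\<Pi>\<^sub>M i\<in>(UNIV :: nat set). measure_pmf \<mu>)"

sublocale P: product_prob_space "\<lambda>_::nat. measure_pmf \<mu>" UNIV
  by unfold_locales

lemma meas_comp[measurable]: "(\<lambda>w. f (w k)) \<in> borel_measurable M"
  for f :: "'a \<Rightarrow> real"
  by (rule measurable_compose[OF measurable_component_singleton]) auto

lemma int_comp: "(\<integral>w. f (w k) \<partial>M) = (\<integral>x. f x \<partial>measure_pmf \<mu>)"
  for f :: "'a \<Rightarrow> real"
proof -
  have "(\<integral>x. f x \<partial>measure_pmf \<mu>) = (\<integral>x. f x \<partial>distr M (measure_pmf \<mu>) (\<lambda>w. w k))"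
    by (subst P.PiM_component) auto
  also have "\<dots> = (\<integral>w. f (w k) \<partial>M)"
    by (rule integral_distr) auto
  finally show ?thesis by simp
qed

lemma int_comp2:
  fixes f h :: "'a \<Rightarrow> real"
  assumes "k \<noteq> l" "integrable (measure_pmf \<mu>) f" "integrable (measure_pmf \<mu>) h"
  shows "(\<integral>w. f (w k) * h (w l) \<partial>M) = (\<integral>x. f x \<partial>measure_pmf \<mu>) * (\<integral>x. h x \<partial>measure_pmf \<mu>)"
proof -
  define J where "J = {k, l}"
  define F where "F i = (if i = k then f else h)" for i
  have "(\<integral>w. f (w k) * h (w l) \<partial>M) = (\<integral>w. (\<Prod>i\<in>J. F i (w i)) \<partial>M)"
    using assms by (simp add: J_def F_def)
  also have "\<dots> = (\<integral>y. (\<Prod>i\<in>J. F i (y i)) \<partial>distr M (\<Pi>\<^sub>M i\<in>J. measure_pmf \<mu>) (\<lambda>x. restrict x J))"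
  proof (subst integral_distr)
    show "(\<lambda>y. \<Prod>i\<in>J. F i (y i)) \<in> borel_measurable (\<Pi>\<^sub>M i\<in>J. measure_pmf \<mu>)"
      by (intro borel_measurable_prod measurable_compose[OF measurable_component_singleton]) auto
  qed (auto simp: J_def)
  also have "\<dots> = (\<integral>y. (\<Prod>i\<in>J. F i (y i)) \<partial>(\<Pi>\<^sub>M i\<in>J. measure_pmf \<mu>))"
    by (subst P.distr_PiM_restrict_finite) (auto simp: J_def)
  also have "\<dots> = (\<Prod>i\<in>J. (\<integral>x. F i x \<partial>measure_pmf \<mu>))"
    by (rule P.product_integral_prod) (auto simp: J_def F_def assms)
  also have "\<dots> = (\<integral>x. f x \<partial>measure_pmf \<mu>) * (\<integral>x. h x \<partial>measure_pmf \<mu>)"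
    using assms by (simp add: J_def F_def)
  finally show ?thesis .
qed

lemma space_M[simp]: "space M = UNIV"
  by (simp add: space_PiM)

lemma int_bounded: "(\<And>x. \<bar>f x\<bar> \<le> c) \<Longrightarrow> integrable (measure_pmf \<mu>) f"
  for f :: "'a \<Rightarrow> real"
  by (rule measure_pmf.integrable_const_bound[where B=c]) auto

lemma intM_bounded: "(\<And>w. \<bar>F w\<bar> \<le> c) \<Longrightarrow> F \<in> borel_measurable M \<Longrightarrow> integrable M F"
  for F :: "(nat \<Rightarrow> 'a) \<Rightarrow> real"
  by (rule P.integrable_const_bound[where B=c]) auto

lemma second_moment:
  fixes h :: "'a \<Rightarrow> real"
  assumes bnd: "\<And>x. \<bar>h x\<bar> \<le> c" and mean0: "(\<integral>x. h x \<partial>measure_pmf \<mu>) = 0"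
  shows "(\<integral>w. (\<Sum>k<N. h (w k))\<^sup>2 \<partial>M) = N * (\<integral>x. (h x)\<^sup>2 \<partial>measure_pmf \<mu>)"
proof -
  have c0: "0 \<le> c" using bnd[of undefined] by simp
  have ih: "integrable (measure_pmf \<mu>) h" by (rule int_bounded[OF bnd])
  have pb: "\<bar>h (w k) * h (w l)\<bar> \<le> c * c" for w k l
    unfolding abs_mult by (intro mult_mono bnd) (auto simp: c0)
  have iM: "integrable M (\<lambda>w. h (w k) * h (w l))" for k l
    by (rule intM_bounded[OF pb]) auto
  have "(\<integral>w. (\<Sum>k<N. h (w k))\<^sup>2 \<partial>M) = (\<integral>w. (\<Sum>k<N. \<Sum>l<N. h (w k) * h (w l)) \<partial>M)"
    by (simp add: power2_eq_square sum_product)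
  also have "\<dots> = (\<Sum>k<N. \<Sum>l<N. (\<integral>w. h (w k) * h (w l) \<partial>M))"
    by (simp add: integral_sum iM integrable_sum)
  also have "\<dots> = (\<Sum>k<N. \<Sum>l<N. (if l = k then (\<integral>x. (h x)\<^sup>2 \<partial>measure_pmf \<mu>) else 0))"
  proof (intro sum.cong refl)
    fix k l
    show "(\<integral>w. h (w k) * h (w l) \<partial>M) = (if l = k then (\<integral>x. (h x)\<^sup>2 \<partial>measure_pmf \<mu>) else 0)"
    proof (cases "l = k")
      case True
      then show ?thesis using int_comp[of "\<lambda>x. (h x)\<^sup>2" k] by (simp add: power2_eq_square)
    next
      case False
      then show ?thesis using int_comp2[of k l h h] ih mean0 by simp
    qed
  qed
  also have "\<dots> = N * (\<integral>x. (h x)\<^sup>2 \<partial>measure_pmf \<mu>)"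
    by simp
  finally show ?thesis .
qed

lemma cheb:
  fixes Z :: "'a \<Rightarrow> real"
  assumes Z0: "\<And>x. 0 \<le> Z x" and ZT: "\<And>x. Z x \<le> T" and N: "N > 0" and d: "\<delta> > 0"
  shows "measure M {w. (\<Sum>k<N. Z (w k)) > N * ((\<integral>x. Z x \<partial>measure_pmf \<mu>) + \<delta>)}
           \<le> (\<integral>x. (Z x)\<^sup>2 \<partial>measure_pmf \<mu>) / (N * \<delta>\<^sup>2)"
proof -
  define m where "m = (\<integral>x. Z x \<partial>measure_pmf \<mu>)"
  define h where "h x = Z x - m" for x
  have T0: "0 \<le> T" using Z0[of undefined] ZT[of undefined] by simp
  have iZ: "integrable (measure_pmf \<mu>) Z" by (rule int_bounded[of _ T]) (use Z0 ZT in \<open>auto simp: abs_le_iff\<close>)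
  have iZ2: "integrable (measure_pmf \<mu>) (\<lambda>x. (Z x)\<^sup>2)"
    by (rule int_bounded[of _ "T*T"]) (use Z0 ZT T0 in \<open>auto simp: power2_eq_square intro!: mult_mono\<close>)
  have m0: "0 \<le> m" unfolding m_def by (rule integral_nonneg_AE) (auto simp: Z0)
  have mT: "m \<le> T" unfolding m_def using measure_pmf.integral_le_const[of \<mu> Z T] ZT iZ T0 by auto
  have hb: "\<bar>h x\<bar> \<le> T + m" for x using Z0[of x] ZT[of x] m0 mT by (auto simp: h_def abs_le_iff)
  have hm: "(\<integral>x. h x \<partial>measure_pmf \<mu>) = 0"
    unfolding h_def using iZ by (simp add: m_def measure_pmf.prob_space)
  have h2: "(\<integral>x. (h x)\<^sup>2 \<partial>measure_pmf \<mu>) \<le> (\<integral>x. (Z x)\<^sup>2 \<partial>measure_pmf \<mu>)"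
  proof -
    have "(\<integral>x. (h x)\<^sup>2 \<partial>measure_pmf \<mu>) = (\<integral>x. (Z x)\<^sup>2 - 2 * m * Z x + m\<^sup>2 \<partial>measure_pmf \<mu>)"
      by (simp add: h_def power2_diff algebra_simps)
    also have "\<dots> = (\<integral>x. (Z x)\<^sup>2 \<partial>measure_pmf \<mu>) - 2 * m * m + m\<^sup>2"
      using iZ iZ2 by (simp add: m_def measure_pmf.prob_space)
    finally show ?thesis by (simp add: power2_eq_square)
  qed
  define S where "S w = (\<Sum>k<N. h (w k))" for w
  have SM: "S \<in> borel_measurable M" unfolding S_def by measurable
  have sub: "{w. (\<Sum>k<N. Z (w k)) > N * (m + \<delta>)} \<subseteq> {w \<in> space M. (S w)\<^sup>2 \<ge> (N * \<delta>)\<^sup>2}"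
  proof safe
    fix w assume "(\<Sum>k<N. Z (w k)) > N * (m + \<delta>)"
    then have "S w > N * \<delta>" by (simp add: S_def h_def sum_subtractf algebra_simps)
    moreover have "0 \<le> N * \<delta>" using d by simp
    ultimately show "(S w)\<^sup>2 \<ge> (N * \<delta>)\<^sup>2" by (intro power_mono) auto
  qed simp
  have Sb: "\<bar>(S w)\<^sup>2\<bar> \<le> (N * (T + m))\<^sup>2" for w
  proof -
    have "\<bar>S w\<bar> \<le> (\<Sum>k<N. \<bar>h (w k)\<bar>)" unfolding S_def by (rule sum_abs)
    also have "\<dots> \<le> N * (T + m)" using sum_bounded_above[of "{..<N}" "\<lambda>k. \<bar>h (w k)\<bar>" "T + m"] hb by simp
    finally show ?thesis using abs_le_square_iff[of "S w" "real N * (T + m)"] by simp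
  qed
  have iS: "integrable M (\<lambda>w. (S w)\<^sup>2)" by (rule intM_bounded[OF Sb]) (use SM in simp)
  have "measure M {w. (\<Sum>k<N. Z (w k)) > N * (m + \<delta>)} \<le> measure M {w \<in> space M. (S w)\<^sup>2 \<ge> (N * \<delta>)\<^sup>2}"
    by (rule P.finite_measure_mono[OF sub]) (use SM in measurable)
  also have "\<dots> \<le> (\<integral>w. (S w)\<^sup>2 \<partial>M) / (N * \<delta>)\<^sup>2"
    by (rule integral_Markov_inequality_measure[OF iS, where A = "space M"]) (use N d in \<open>auto simp del: space_M\<close>)
  also have "(\<integral>w. (S w)\<^sup>2 \<partial>M) = N * (\<integral>x. (h x)\<^sup>2 \<partial>measure_pmf \<mu>)"
    unfolding S_def by (rule second_moment[OF hb hm])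
  also have "N * (\<integral>x. (h x)\<^sup>2 \<partial>measure_pmf \<mu>) / (N * \<delta>)\<^sup>2 = (\<integral>x. (h x)\<^sup>2 \<partial>measure_pmf \<mu>) / (N * \<delta>\<^sup>2)"
    using N by (simp add: power2_eq_square field_simps)
  also have "\<dots> \<le> (\<integral>x. (Z x)\<^sup>2 \<partial>measure_pmf \<mu>) / (N * \<delta>\<^sup>2)"
    by (rule divide_right_mono[OF h2]) (use N d in simp)
  finally show ?thesis unfolding m_def .
qed

end


lemma geo1:
  fixes a y :: real assumes a: "a > 1" and y: "y \<ge> 0"
  shows "(\<Sum>j<n. (if a^j < y then a^j else 0)) \<le> a * y / (a - 1)"
proof -
  have inv: "(a - 1) * (\<Sum>j<n. (if a^j < y then a^j else 0)) \<le> a^n - 1 \<and>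
             (a - 1) * (\<Sum>j<n. (if a^j < y then a^j else 0)) \<le> max 0 (a * y - 1)" for n
  proof (induction n)
    case 0 then show ?case by simp
  next
    case (Suc n)
    have an: "1 \<le> a^n" using a by simp
    show ?case
    proof (cases "a^n < y")
      case True
      have "(a - 1) * (\<Sum>j<Suc n. (if a^j < y then a^j else 0)) =
            (a - 1) * (\<Sum>j<n. (if a^j < y then a^j else 0)) + (a - 1) * a^n"
        using True by (simp add: algebra_simps)
      also have "\<dots> \<le> a^n - 1 + (a - 1) * a^n" using Suc by simp
      also have "\<dots> = a^(Suc n) - 1" by (simp add: algebra_simps)
      finally have 1: "(a - 1) * (\<Sum>j<Suc n. (if a^j < y then a^j else 0)) \<le> a^(Suc n) - 1" .
      have "a^(Suc n) < a * y" using True a by simp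
      with 1 show ?thesis by auto
    next
      case False
      have "a^n \<le> a^Suc n" using a by simp
      then show ?thesis using Suc False by auto
    qed
  qed
  have "(a - 1) * (\<Sum>j<n. (if a^j < y then a^j else 0)) \<le> a * y"
  proof -
    have ay: "0 \<le> a * y" using a y by simp
    have "(a - 1) * (\<Sum>j<n. (if a^j < y then a^j else 0)) \<le> max 0 (a * y - 1)" using inv[of n] by blast
    then show ?thesis using ay unfolding max_def by (auto split: if_splits)
  qed
  then show ?thesis using a by (simp add: field_simps mult.commute)
qed

lemma geo2:
  fixes a y :: real assumes a: "a > 1" and y: "y \<ge> 0"
  shows "(\<Sum>j<n. (if y \<le> a^j then y^2 / a^j else 0)) \<le> a * y / (a - 1)"
proof (cases "y = 0")
  case True
  then have "\<And>j. (if y \<le> a^j then y^2 / a^j else 0) = 0" by simp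
  then show ?thesis using True by simp
next
  case False
  then have y0: "y > 0" using y by simp
  define b where "b = 1 / a"
  have b0: "0 < b" "b < 1" using a by (auto simp: b_def)
  have ab: "1 / a^j = b^j" for j by (simp add: b_def power_one_over)
  have inv: "(1 - b) * (\<Sum>j<n. (if y \<le> a^j then b^j else 0)) \<le> max 0 (1 / y - b^n)" for n
  proof (induction n)
    case 0 then show ?case by simp
  next
    case (Suc n)
    show ?case
    proof (cases "y \<le> a^n")
      case True
      have "b^n \<le> 1 / y" using True y0 a unfolding ab[symmetric] by (simp add: field_simps)
      then have m: "max 0 (1 / y - b^n) = 1 / y - b^n" by simp
      have "(1 - b) * (\<Sum>j<Suc n. (if y \<le> a^j then b^j else 0)) =
            (1 - b) * (\<Sum>j<n. (if y \<le> a^j then b^j else 0)) + (1 - b) * b^n"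
        using True by (simp add: algebra_simps)
      also have "\<dots> \<le> 1 / y - b^n + (1 - b) * b^n" using Suc m by simp
      also have "\<dots> = 1 / y - b^Suc n" by (simp add: algebra_simps)
      finally show ?thesis by simp
    next
      case False
      have "b^Suc n \<le> b^n" using b0 by (simp add: power_decreasing_iff)
      then have "max 0 (1 / y - b^n) \<le> max 0 (1 / y - b^Suc n)" by simp
      then show ?thesis using Suc False by simp
    qed
  qed
  have S: "(\<Sum>j<n. (if y \<le> a^j then b^j else 0)) \<le> 1 / (y * (1 - b))"
  proof -
    have "b^n > 0" using b0 by simp
    then have "max 0 (1 / y - b^n) \<le> 1 / y" using y0 by simp
    then have "(1 - b) * (\<Sum>j<n. (if y \<le> a^j then b^j else 0)) \<le> 1 / y" using inv[of n] by (meson order_trans)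
    then show ?thesis using b0 y0 by (simp add: field_simps mult.commute)
  qed
  have "(\<Sum>j<n. (if y \<le> a^j then y^2 / a^j else 0)) = y^2 * (\<Sum>j<n. (if y \<le> a^j then b^j else 0))"
    unfolding sum_distrib_left by (intro sum.cong refl) (auto simp: b_def power_one_over)
  also have "\<dots> \<le> y^2 * (1 / (y * (1 - b)))" using S by (intro mult_left_mono) auto
  also have "\<dots> = a * y / (a - 1)" using y0 a by (simp add: b_def power2_eq_square field_simps)
  finally show ?thesis .
qed

lemma interp:
  fixes a c :: real and s :: "nat \<Rightarrow> real"
  assumes a: "a > 1" and c: "c \<ge> 0" and mono: "\<And>m n. m \<le> n \<Longrightarrow> s m \<le> s n"
    and ev: "eventually (\<lambda>j. s (nat \<lceil>a^j\<rceil>) \<le> nat \<lceil>a^j\<rceil> * c) sequentially"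
  shows "eventually (\<lambda>n. s n \<le> (a * n + 1) * c) sequentially"
proof -
  obtain J where J: "\<And>j. j \<ge> J \<Longrightarrow> s (nat \<lceil>a^j\<rceil>) \<le> nat \<lceil>a^j\<rceil> * c"
    using ev by (auto simp: eventually_sequentially)
  obtain N0 :: nat where N0: "a^J < N0" using reals_Archimedean2 by blast
  show ?thesis unfolding eventually_sequentially
  proof (intro exI[of _ "max N0 2"] allI impI)
    fix n :: nat assume n: "max N0 2 \<le> n"
    have ex: "\<exists>j. real n \<le> a^j" using real_arch_pow[OF a] by (metis less_eq_real_def)
    define j where "j = (LEAST j. real n \<le> a^j)"
    have j1: "real n \<le> a^j" unfolding j_def by (rule LeastI_ex[OF ex])
    have jJ: "j \<ge> J"
    proof (rule ccontr)
      assume "\<not> J \<le> j"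
      then have "a^j \<le> a^J" using a by (intro power_increasing) auto
      then show False using j1 N0 n by linarith
    qed
    have j0: "j \<noteq> 0" using j1 n by (intro notI) simp
    then obtain i where i: "j = Suc i" by (cases j) auto
    have "\<not> real n \<le> a^i" using not_less_Least[of i "\<lambda>j. real n \<le> a^j"] i unfolding j_def by simp
    then have ai: "a^j < a * n" using a i by simp
    have "n \<le> nat \<lceil>a^j\<rceil>" using j1 by linarith
    then have "s n \<le> s (nat \<lceil>a^j\<rceil>)" by (rule mono)
    also have "\<dots> \<le> nat \<lceil>a^j\<rceil> * c" using J[OF jJ] .
    also have "\<dots> \<le> (a * n + 1) * c"
    proof (rule mult_right_mono[OF _ c])
      have "real (nat \<lceil>a^j\<rceil>) < a^j + 1"
        using a by (simp add: of_nat_nat) linarith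
      then show "real (nat \<lceil>a^j\<rceil>) \<le> a * real n + 1" using ai by simp
    qed
    finally show "s n \<le> (a * n + 1) * c" .
  qed
qed


context iidseq begin

lemma sets_comp[measurable]: "{w. P (w k)} \<in> sets M"
proof -
  have "{w. P (w k)} = (\<lambda>w. w k) -` {x. P x} \<inter> space M" by auto
  also have "\<dots> \<in> sets M"
    by (rule measurable_sets[OF measurable_component_singleton]) auto
  finally show ?thesis .
qed

lemma prob_comp: "measure M {w. P (w k)} = (\<integral>x. (if P x then 1 else 0) \<partial>measure_pmf \<mu>)"
proof -
  have "measure M {w. P (w k)} = (\<integral>w. indicator {w. P (w k)} w \<partial>M)"
    by (simp add: Bochner_Integration.integral_indicator)
  also have "\<dots> = (\<integral>w. (\<lambda>x. if P x then 1 else 0) (w k) \<partial>M)"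
    by (intro Bochner_Integration.integral_cong) (auto simp: indicator_def)
  also have "\<dots> = (\<integral>x. (if P x then 1 else 0) \<partial>measure_pmf \<mu>)"
    by (rule int_comp)
  finally show ?thesis .
qed

lemma slln_step:
  fixes g :: "'a \<Rightarrow> real" and a \<delta> :: real
  assumes g0: "\<And>x. 0 \<le> g x" and ig: "integrable (measure_pmf \<mu>) g" and a: "a > 1" and d: "\<delta> > 0"
  shows "AE w in M. eventually (\<lambda>j. (\<Sum>k<nat \<lceil>a^j\<rceil>. g (w k)) \<le> nat \<lceil>a^j\<rceil> * ((\<integral>x. g x \<partial>measure_pmf \<mu>) + \<delta>)) sequentially"
proof -
  define E where "E = (\<integral>x. g x \<partial>measure_pmf \<mu>)"
  define N where "N j = nat \<lceil>a^j\<rceil>" for j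
  define Z where "Z j x = (if g x \<le> a^j then g x else 0)" for j x
  define B where "B j = {w. \<exists>k<N j. g (w k) > a^j}" for j
  define C where "C j = {w. (\<Sum>k<N j. Z j (w k)) > N j * ((\<integral>x. Z j x \<partial>measure_pmf \<mu>) + \<delta>)}" for j
  define D where "D j = B j \<union> C j" for j
  define f where "f j x = 2 * a^j * (if a^j < g x then 1 else 0) + (Z j x)\<^sup>2 / (a^j * \<delta>\<^sup>2)" for j x
  have aj: "1 \<le> a^j" for j using a by simp
  have N1: "a^j \<le> N j" "N j \<le> 2 * a^j" "0 < N j" for j
    using aj[of j] by (auto simp: N_def) linarith+
  have Z0: "0 \<le> Z j x" "Z j x \<le> a^j" "Z j x \<le> g x" for j x using g0[of x] aj[of j] by (auto simp: Z_def)
  have iZ: "integrable (measure_pmf \<mu>) (Z j)" for j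
    by (rule int_bounded[of _ "a^j"]) (use Z0 in \<open>auto simp: abs_le_iff\<close>)
  have fb: "\<bar>f j x\<bar> \<le> 2 * a^j + (a^j)\<^sup>2 / (a^j * \<delta>\<^sup>2)" for j x
  proof -
    have "(Z j x)\<^sup>2 \<le> (a^j)\<^sup>2" using Z0[of j x] by (intro power_mono) auto
    then have "(Z j x)\<^sup>2 / (a^j * \<delta>\<^sup>2) \<le> (a^j)\<^sup>2 / (a^j * \<delta>\<^sup>2)"
      using aj[of j] d by (intro divide_right_mono) auto
    moreover have "0 \<le> (Z j x)\<^sup>2 / (a^j * \<delta>\<^sup>2)" using aj[of j] by simp
    ultimately show ?thesis using aj[of j] unfolding f_def by auto
  qed
  have if_: "integrable (measure_pmf \<mu>) (f j)" for j by (rule int_bounded[OF fb])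
  have Bm: "B j \<in> sets M" for j
  proof -
    have "B j = (\<Union>k\<in>{..<N j}. {w. a^j < g (w k)})" by (auto simp: B_def)
    also have "\<dots> \<in> sets M" by (intro sets.finite_UN) (auto simp: sets_comp)
    finally show ?thesis .
  qed
  have Cm: "C j \<in> sets M" for j
  proof -
    have "C j = {w \<in> space M. N j * ((\<integral>x. Z j x \<partial>measure_pmf \<mu>) + \<delta>) < (\<Sum>k<N j. Z j (w k))}"
      by (auto simp: C_def)
    also have "\<dots> \<in> sets M" by measurable
    finally show ?thesis .
  qed
  have PB: "measure M (B j) \<le> N j * (\<integral>x. (if a^j < g x then 1 else 0) \<partial>measure_pmf \<mu>)" for j
  proof -
    have "B j = (\<Union>k\<in>{..<N j}. {w. a^j < g (w k)})" by (auto simp: B_def)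
    then have "measure M (B j) \<le> (\<Sum>k<N j. measure M {w. a^j < g (w k)})"
      by (simp only:) (rule P.finite_measure_subadditive_finite, auto)
    also have "\<dots> = N j * (\<integral>x. (if a^j < g x then 1 else 0) \<partial>measure_pmf \<mu>)"
      using prob_comp[of "\<lambda>x. a^j < g x"] by simp
    finally show ?thesis .
  qed
  have PC: "measure M (C j) \<le> (\<integral>x. (Z j x)\<^sup>2 \<partial>measure_pmf \<mu>) / (a^j * \<delta>\<^sup>2)" for j
  proof -
    have "measure M (C j) \<le> (\<integral>x. (Z j x)\<^sup>2 \<partial>measure_pmf \<mu>) / (N j * \<delta>\<^sup>2)"
      unfolding C_def by (rule cheb[OF Z0(1) Z0(2) N1(3) d])
    also have "\<dots> \<le> (\<integral>x. (Z j x)\<^sup>2 \<partial>measure_pmf \<mu>) / (a^j * \<delta>\<^sup>2)"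
      by (intro divide_left_mono integral_nonneg_AE mult_right_mono mult_pos_pos)
         (use N1 aj d in \<open>auto intro: less_le_trans[OF _ aj]\<close>)
    finally show ?thesis .
  qed
  have PD: "measure M (D j) \<le> (\<integral>x. f j x \<partial>measure_pmf \<mu>)" for j
  proof -
    have i1: "integrable (measure_pmf \<mu>) (\<lambda>x. (if a^j < g x then 1 else 0) :: real)"
      by (rule int_bounded[of _ 1]) auto
    have i2: "integrable (measure_pmf \<mu>) (\<lambda>x. (Z j x)\<^sup>2)"
      by (rule int_bounded[of _ "(a^j)\<^sup>2"]) (use Z0 in \<open>auto intro: power_mono\<close>)
    have "measure M (D j) \<le> measure M (B j) + measure M (C j)"
      unfolding D_def by (rule measure_Un_le) (auto simp: Bm Cm)
    also have "\<dots> \<le> N j * (\<integral>x. (if a^j < g x then 1 else 0) \<partial>measure_pmf \<mu>)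
                    + (\<integral>x. (Z j x)\<^sup>2 \<partial>measure_pmf \<mu>) / (a^j * \<delta>\<^sup>2)"
      using PB PC by (rule add_mono)
    also have "\<dots> \<le> 2 * a^j * (\<integral>x. (if a^j < g x then 1 else 0) \<partial>measure_pmf \<mu>)
                    + (\<integral>x. (Z j x)\<^sup>2 \<partial>measure_pmf \<mu>) / (a^j * \<delta>\<^sup>2)"
      by (intro add_mono mult_right_mono N1 integral_nonneg_AE) auto
    also have "\<dots> = (\<integral>x. f j x \<partial>measure_pmf \<mu>)"
      unfolding f_def using i1 i2 by simp
    finally show ?thesis .
  qed
  define K where "K = 2 * a / (a - 1) + a / ((a - 1) * \<delta>\<^sup>2)"
  have fsum: "(\<Sum>j<n. f j x) \<le> K * g x" for n x
  proof -
    have "(\<Sum>j<n. f j x) = 2 * (\<Sum>j<n. (if a^j < g x then a^j else 0))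
          + (\<Sum>j<n. (if g x \<le> a^j then (g x)\<^sup>2 / a^j else 0)) / \<delta>\<^sup>2"
    proof -
      have "f j x = 2 * (if a^j < g x then a^j else 0) + (if g x \<le> a^j then (g x)\<^sup>2 / a^j else 0) / \<delta>\<^sup>2" for j
        by (simp add: f_def Z_def)
      then show ?thesis by (simp add: sum.distrib sum_distrib_left sum_divide_distrib)
    qed
    also have "\<dots> \<le> 2 * (a * g x / (a - 1)) + (a * g x / (a - 1)) / \<delta>\<^sup>2"
      by (intro add_mono mult_left_mono divide_right_mono geo1 geo2 a g0) auto
    also have "\<dots> = K * g x" using a d by (simp add: K_def field_simps)
    finally show ?thesis .
  qed
  have f0: "0 \<le> f j x" for j x using aj[of j] by (simp add: f_def)
  have sumf: "summable (\<lambda>j. (\<integral>x. f j x \<partial>measure_pmf \<mu>))"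
  proof (rule summableI_nonneg_bounded)
    show "0 \<le> (\<integral>x. f j x \<partial>measure_pmf \<mu>)" for j by (rule integral_nonneg_AE) (simp add: f0)
    fix n
    have "(\<Sum>j<n. (\<integral>x. f j x \<partial>measure_pmf \<mu>)) = (\<integral>x. (\<Sum>j<n. f j x) \<partial>measure_pmf \<mu>)"
      by (rule Bochner_Integration.integral_sum[symmetric]) (rule if_)
    also have "\<dots> \<le> (\<integral>x. K * g x \<partial>measure_pmf \<mu>)"
      using if_ ig by (intro Bochner_Integration.integral_mono integrable_sum fsum) auto
    finally show "(\<Sum>j<n. (\<integral>x. f j x \<partial>measure_pmf \<mu>)) \<le> (\<integral>x. K * g x \<partial>measure_pmf \<mu>)" .
  qed
  have sumD: "summable (\<lambda>j. measure M (D j))"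
    by (rule summable_comparison_test'[OF sumf, of 0]) (use PD in auto)
  have Dm: "D j \<in> sets M" for j unfolding D_def using Bm Cm by auto
  have "AE w in M. eventually (\<lambda>j. w \<in> space M - D j) sequentially"
    by (rule borel_cantelli_AE1[OF Dm]) (auto simp: sumD P.emeasure_finite less_top[symmetric])
  then show ?thesis
  proof (rule AE_mp, intro AE_I2 impI)
    fix w assume "eventually (\<lambda>j. w \<in> space M - D j) sequentially"
    then show "eventually (\<lambda>j. (\<Sum>k<nat \<lceil>a^j\<rceil>. g (w k)) \<le> nat \<lceil>a^j\<rceil> * ((\<integral>x. g x \<partial>measure_pmf \<mu>) + \<delta>)) sequentially"
    proof (rule eventually_mono)
      fix j assume "w \<in> space M - D j"
      then have nB: "w \<notin> B j" and nC: "w \<notin> C j" by (auto simp: D_def)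
      have "(\<Sum>k<N j. g (w k)) = (\<Sum>k<N j. Z j (w k))"
        using nB by (intro sum.cong) (auto simp: B_def Z_def not_less dest: leD)
      also have "\<dots> \<le> N j * ((\<integral>x. Z j x \<partial>measure_pmf \<mu>) + \<delta>)" using nC by (simp add: C_def not_less)
      also have "\<dots> \<le> N j * ((\<integral>x. g x \<partial>measure_pmf \<mu>) + \<delta>)"
        by (intro mult_left_mono add_right_mono Bochner_Integration.integral_mono iZ ig Z0) auto
      finally show "(\<Sum>k<nat \<lceil>a^j\<rceil>. g (w k)) \<le> nat \<lceil>a^j\<rceil> * ((\<integral>x. g x \<partial>measure_pmf \<mu>) + \<delta>)"
        by (simp add: N_def)
    qed
  qed
qed

lemma slln_upper:
  fixes g :: "'a \<Rightarrow> real"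
  assumes g0: "\<And>x. 0 \<le> g x" and ig: "integrable (measure_pmf \<mu>) g"
  shows "AE w in M. \<forall>\<eta>>0. eventually (\<lambda>n. (\<Sum>k<n. g (w k)) \<le> n * ((\<integral>x. g x \<partial>measure_pmf \<mu>) + \<eta>)) sequentially"
proof -
  define E where "E = (\<integral>x. g x \<partial>measure_pmf \<mu>)"
  have E0: "0 \<le> E" unfolding E_def by (rule integral_nonneg_AE) (simp add: g0)
  have one: "AE w in M. eventually (\<lambda>n. (\<Sum>k<n. g (w k)) \<le> n * (E + \<eta>)) sequentially"
    if eta: "0 < \<eta>" "\<eta> \<le> 1" for \<eta>
  proof -
    define \<delta> where "\<delta> = \<eta> / 4"
    define a where "a = 1 + \<eta> / (4 * (E + 1))"
    have d: "0 < \<delta>" "\<delta> \<le> 1" using eta by (auto simp: \<delta>_def)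
    have a: "a > 1" using eta E0 by (auto simp: a_def)
    have ac: "a * (E + \<delta>) \<le> E + \<eta> / 2"
    proof -
      have "a * (E + \<delta>) = E + \<delta> + (\<eta> / 4) * ((E + \<delta>) / (E + 1))"
        using E0 by (simp add: a_def field_simps)
      also have "(E + \<delta>) / (E + 1) \<le> 1" using d E0 by simp
      then have "(\<eta> / 4) * ((E + \<delta>) / (E + 1)) \<le> \<eta> / 4" using eta
        by (intro mult_left_le) auto
      finally show ?thesis by (simp add: \<delta>_def)
    qed
    show ?thesis using slln_step[OF g0 ig a d(1)]
    proof (rule AE_mp, intro AE_I2 impI)
      fix w
      assume ev: "eventually (\<lambda>j. (\<Sum>k<nat \<lceil>a^j\<rceil>. g (w k)) \<le> nat \<lceil>a^j\<rceil> * ((\<integral>x. g x \<partial>measure_pmf \<mu>) + \<delta>)) sequentially"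
      have mono: "(\<Sum>k<m. g (w k)) \<le> (\<Sum>k<n. g (w k))" if "m \<le> n" for m n
        using that by (intro sum_mono2) (auto simp: g0)
      have "eventually (\<lambda>n. (\<Sum>k<n. g (w k)) \<le> (a * n + 1) * (E + \<delta>)) sequentially"
        by (rule interp[OF a _ mono]) (use E0 d ev in \<open>auto simp: E_def\<close>)
      moreover have "eventually (\<lambda>n. (a * n + 1) * (E + \<delta>) \<le> n * (E + \<eta>)) sequentially"
        using eventually_ge_at_top[of "nat \<lceil>2 * (E + \<delta>) / \<eta>\<rceil>"]
      proof (rule eventually_mono)
        fix n assume n: "nat \<lceil>2 * (E + \<delta>) / \<eta>\<rceil> \<le> n"
        then have "2 * (E + \<delta>) / \<eta> \<le> n" by linarith
        then have n2: "E + \<delta> \<le> n * (\<eta> / 2)" using eta by (simp add: field_simps)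
        have "(a * n + 1) * (E + \<delta>) = n * (a * (E + \<delta>)) + (E + \<delta>)" by (simp add: algebra_simps)
        also have "\<dots> \<le> n * (E + \<eta> / 2) + n * (\<eta> / 2)"
          by (intro add_mono mult_left_mono ac n2) auto
        also have "\<dots> = n * (E + \<eta>)" by (simp add: algebra_simps)
        finally show "(a * n + 1) * (E + \<delta>) \<le> n * (E + \<eta>)" .
      qed
      ultimately show "eventually (\<lambda>n. (\<Sum>k<n. g (w k)) \<le> n * (E + \<eta>)) sequentially"
        by eventually_elim (rule order_trans)
    qed
  qed
  have "AE w in M. \<forall>m::nat. eventually (\<lambda>n. (\<Sum>k<n. g (w k)) \<le> n * (E + 1 / Suc m)) sequentially"
    by (subst AE_all_countable) (intro allI one, auto)
  then show ?thesis
  proof (rule AE_mp, intro AE_I2 impI)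
    fix w
    assume all: "\<forall>m::nat. eventually (\<lambda>n. (\<Sum>k<n. g (w k)) \<le> n * (E + 1 / Suc m)) sequentially"
    show "\<forall>\<eta>>0. eventually (\<lambda>n. (\<Sum>k<n. g (w k)) \<le> n * ((\<integral>x. g x \<partial>measure_pmf \<mu>) + \<eta>)) sequentially"
    proof (intro allI impI)
      fix \<eta> :: real
      assume "0 < \<eta>"
      then obtain m :: nat where m: "1 / Suc m < \<eta>" using nat_approx_posE by blast
      show "eventually (\<lambda>n. (\<Sum>k<n. g (w k)) \<le> n * ((\<integral>x. g x \<partial>measure_pmf \<mu>) + \<eta>)) sequentially"
        using all[rule_format, of m]
      proof (rule eventually_mono)
        fix n assume "(\<Sum>k<n. g (w k)) \<le> n * (E + 1 / Suc m)"
        also have "\<dots> \<le> n * (E + \<eta>)" using m by (intro mult_left_mono) auto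
        finally show "(\<Sum>k<n. g (w k)) \<le> n * ((\<integral>x. g x \<partial>measure_pmf \<mu>) + \<eta>)" by (simp add: E_def)
      qed
    qed
  qed
qed

end


lemma pmf_integrable_summable:
  fixes \<mu> :: "'a::countable pmf" and g :: "'a \<Rightarrow> real"
  assumes g0: "\<And>x. 0 \<le> g x" and sm: "(\<lambda>x. pmf \<mu> x * g x) summable_on UNIV"
  shows "integrable (measure_pmf \<mu>) g"
    and "(\<integral>x. g x \<partial>measure_pmf \<mu>) = infsum (\<lambda>x. pmf \<mu> x * g x) UNIV"
proof -
  define h where "h x = pmf \<mu> x * g x" for x
  have h0: "0 \<le> h x" for x using g0[of x] by (simp add: h_def)
  have "h summable_on UNIV" using sm by (simp add: h_def[abs_def])
  then have "Infinite_Sum.abs_summable_on h UNIV"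
    using summable_on_iff_abs_summable_on_real by blast
  then have as: "Infinite_Set_Sum.abs_summable_on h UNIV"
    using abs_summable_equivalent by blast
  then have ic: "integrable (count_space UNIV) h" by (simp add: abs_summable_on_def)
  have eq: "integrable (measure_pmf \<mu>) g \<longleftrightarrow> integrable (count_space UNIV) (\<lambda>x. pmf \<mu> x *\<^sub>R g x)"
    unfolding measure_pmf_eq_density by (rule integrable_density) auto
  show "integrable (measure_pmf \<mu>) g" using eq ic by (simp add: h_def[abs_def])
  have "(\<integral>x. g x \<partial>measure_pmf \<mu>) = (\<integral>x. pmf \<mu> x *\<^sub>R g x \<partial>count_space UNIV)"
    unfolding measure_pmf_eq_density by (rule integral_density) auto
  also have "\<dots> = infsetsum h UNIV" by (simp add: infsetsum_def h_def)
  also have "\<dots> = infsum h UNIV" by (rule infsetsum_infsum[OF as])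
  finally show "(\<integral>x. g x \<partial>measure_pmf \<mu>) = infsum (\<lambda>x. pmf \<mu> x * g x) UNIV" by (simp add: h_def[abs_def])
qed

lemma pmf_mass_summable:
  fixes \<mu> :: "'a::countable pmf"
  shows "pmf \<mu> summable_on {x. pmf \<mu> x > 0}" "infsum (pmf \<mu>) {x. pmf \<mu> x > 0} = 1"
proof -
  have as: "Infinite_Set_Sum.abs_summable_on (pmf \<mu>) {x. pmf \<mu> x > 0}" by (rule pmf_abs_summable)
  then have "Infinite_Sum.abs_summable_on (pmf \<mu>) {x. pmf \<mu> x > 0}" using abs_summable_equivalent by blast
  then show "pmf \<mu> summable_on {x. pmf \<mu> x > 0}" using summable_on_iff_abs_summable_on_real by blast
  have "infsetsum (pmf \<mu>) {x. pmf \<mu> x > 0} = 1"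
    by (rule infsetsum_pmf_eq_1) (auto simp: set_pmf_eq pmf_nonneg order_le_neq_trans)
  then show "infsum (pmf \<mu>) {x. pmf \<mu> x > 0} = 1" using infsetsum_infsum[OF as] by simp
qed

context iidseq begin

lemma count_sum: "(\<Sum>k<n. (if w k = x then 1 else 0 :: real)) = real (card {k\<in>{..<n}. w k = x})" for n :: nat
proof -
  have "{k\<in>{..<n}. w k = x} = {..<n} \<inter> {k. w k = x}" by auto
  moreover have "real (card ({..<n} \<inter> {k. w k = x})) = (\<Sum>k<n. (if w k = x then 1 else 0 :: real))"
    using sum.inter_restrict[where g="\<lambda>_. 1::real" and A="{..<n}" and B="{k. w k = x}"] by (simp add: finite_lessThan)
  ultimately show ?thesis by simp
qed

lemma freq_conv: "AE w in M. \<forall>x. (\<lambda>n. emp n w x) \<longlonglongrightarrow> pmf \<mu> x"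
proof -
  have one: "AE w in M. (\<lambda>n. emp n w x) \<longlonglongrightarrow> pmf \<mu> x" for x
  proof -
    define g1 where "g1 y = (if y = x then 1 else 0 :: real)" for y
    define g2 where "g2 y = (if y = x then 0 else 1 :: real)" for y
    have i1: "(\<integral>y. g1 y \<partial>measure_pmf \<mu>) = pmf \<mu> x"
      by (subst integral_measure_pmf[of "{x}"]) (auto simp: g1_def split: if_splits)
    have i2: "(\<integral>y. g2 y \<partial>measure_pmf \<mu>) = 1 - pmf \<mu> x"
    proof -
      have "g2 = (\<lambda>y. 1 - g1 y)" by (auto simp: g1_def g2_def)
      moreover have "integrable (measure_pmf \<mu>) g1" by (rule int_bounded[of _ 1]) (auto simp: g1_def)
      ultimately show ?thesis using i1 by (simp add: measure_pmf.prob_space)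
    qed
    have g1: "(\<Sum>k<n. g1 (w k)) = card {k\<in>{..<n}. w k = x}" for n :: nat and w :: "nat \<Rightarrow> 'a"
      unfolding g1_def by (rule count_sum)
    have g2: "(\<Sum>k<n. g2 (w k)) = real n - real (card {k\<in>{..<n}. w k = x})" for n :: nat and w :: "nat \<Rightarrow> 'a"
    proof -
      have "(\<Sum>k<n. g2 (w k)) = (\<Sum>k<n. 1 - g1 (w k))" by (intro sum.cong) (auto simp: g1_def g2_def)
      also have "\<dots> = real n - real (card {k\<in>{..<n}. w k = x})" by (simp only: sum_subtractf g1) simp
      finally show ?thesis .
    qed
    have A1: "AE w in M. \<forall>\<eta>>0. eventually (\<lambda>n. (\<Sum>k<n. g1 (w k)) \<le> n * (pmf \<mu> x + \<eta>)) sequentially"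
      using slln_upper[of g1] i1 by (auto simp: g1_def int_bounded[of _ 1])
    have A2: "AE w in M. \<forall>\<eta>>0. eventually (\<lambda>n. (\<Sum>k<n. g2 (w k)) \<le> n * (1 - pmf \<mu> x + \<eta>)) sequentially"
      using slln_upper[of g2] i2 by (auto simp: g2_def int_bounded[of _ 1])
    show ?thesis using A1 A2
    proof (eventually_elim)
      case (elim w)
      show ?case unfolding tendsto_iff
      proof (intro allI impI)
        fix e :: real assume e: "0 < e"
        have "eventually (\<lambda>n. (\<Sum>k<n. g1 (w k)) \<le> n * (pmf \<mu> x + e/2) \<and>
             (\<Sum>k<n. g2 (w k)) \<le> n * (1 - pmf \<mu> x + e/2) \<and> n \<ge> 1) sequentially"
          using elim e by (intro eventually_conj eventually_ge_at_top) auto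
        then show "eventually (\<lambda>n. dist (emp n w x) (pmf \<mu> x) < e) sequentially"
        proof (rule eventually_mono)
          fix n :: nat
          assume h: "(\<Sum>k<n. g1 (w k)) \<le> n * (pmf \<mu> x + e/2) \<and>
             (\<Sum>k<n. g2 (w k)) \<le> n * (1 - pmf \<mu> x + e/2) \<and> n \<ge> 1"
          define c where "c = real (card {k\<in>{..<n}. w k = x})"
          have n0: "real n > 0" using h by simp
          have c1: "c \<le> n * (pmf \<mu> x + e/2)" using h unfolding g1 c_def by simp
          have c2: "n - c \<le> n * (1 - pmf \<mu> x + e/2)" using h unfolding g2 c_def by simp
          have "c / n \<le> pmf \<mu> x + e/2" using c1 n0 by (simp add: field_simps)
          moreover have "pmf \<mu> x - e/2 \<le> c / n" using c2 n0 by (simp add: field_simps)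
          ultimately have "\<bar>c / n - pmf \<mu> x\<bar> < e" using e by auto
          then show "dist (emp n w x) (pmf \<mu> x) < e" by (simp add: emp_def c_def dist_real_def)
        qed
      qed
    qed
  qed
  show ?thesis by (subst AE_all_countable) (intro allI one)
qed

end


lemma sum_group:
  fixes w :: "nat \<Rightarrow> 'a" and f :: "'a \<Rightarrow> real"
  shows "(\<Sum>k<n. f (w k)) = (\<Sum>x\<in>w ` {..<n}. real (card {k\<in>{..<n}. w k = x}) * f x)"
proof -
  have "(\<Sum>k<n. f (w k)) = (\<Sum>x\<in>w ` {..<n}. (\<Sum>k\<in>{k. k \<in> {..<n} \<and> w k = x}. f (w k)))"
    by (rule sum.image_gen) simp
  also have "\<dots> = (\<Sum>x\<in>w ` {..<n}. real (card {k\<in>{..<n}. w k = x}) * f x)"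
  proof (rule sum.cong[OF refl])
    fix x
    have "(\<Sum>k\<in>{k. k \<in> {..<n} \<and> w k = x}. f (w k)) = (\<Sum>k\<in>{k. k \<in> {..<n} \<and> w k = x}. f x)"
      by (rule sum.cong) auto
    then show "(\<Sum>k\<in>{k. k \<in> {..<n} \<and> w k = x}. f (w k)) = real (card {k\<in>{..<n}. w k = x}) * f x"
      by simp
  qed
  finally show ?thesis .
qed

lemma emp_sum:
  fixes w :: "nat \<Rightarrow> 'a" and f :: "'a \<Rightarrow> real"
  assumes "n > 0"
  shows "(\<Sum>x\<in>w ` {..<n}. emp n w x * f x) = (\<Sum>k<n. f (w k)) / n"
  using assms by (simp add: sum_group emp_def sum_divide_distrib)

lemma emp_nonneg: "0 \<le> emp n w x" by (simp add: emp_def)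

lemma emp_pos_in: "emp n w x > 0 \<Longrightarrow> x \<in> w ` {..<n}"
proof -
  assume "emp n w x > 0"
  then have "card {k\<in>{..<n}. w k = x} \<noteq> 0" unfolding emp_def by (metis div_0 less_irrefl of_nat_0)
  then have "{k\<in>{..<n}. w k = x} \<noteq> {}" by (metis card.empty)
  then obtain k where "k < n" "w k = x" by auto
  then show ?thesis by auto
qed

lemma emp_total: "n > 0 \<Longrightarrow> (\<Sum>x\<in>w ` {..<n}. emp n w x) = 1"
  using emp_sum[of n w "\<lambda>_. 1"] by simp

lemma Gam_sub: "eps > 0 \<Longrightarrow> Gam n w eps \<subseteq> w ` {..<n}"
  by (auto simp: Gam_def intro!: emp_pos_in)

lemma Gam_finite: "eps > 0 \<Longrightarrow> finite (Gam n w eps)"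
  by (rule finite_subset[OF Gam_sub]) auto

lemma Gam_nonempty_n: "eps > 0 \<Longrightarrow> Gam n w eps \<noteq> {} \<Longrightarrow> n > 0"
  using Gam_sub[of eps n w] by auto

lemma S_le1: "eps > 0 \<Longrightarrow> n > 0 \<Longrightarrow> (\<Sum>y\<in>Gam n w eps. emp n w y) \<le> 1"
  using sum_mono2[OF _ Gam_sub[of eps n w], of "\<lambda>y. emp n w y"] emp_total[of n w] emp_nonneg
  by (metis finite_imageI finite_lessThan)

lemma S_pos: "eps > 0 \<Longrightarrow> Gam n w eps \<noteq> {} \<Longrightarrow> (\<Sum>y\<in>Gam n w eps. emp n w y) > 0"
proof -
  assume e: "eps > 0" and ne: "Gam n w eps \<noteq> {}"
  then obtain x where x: "x \<in> Gam n w eps" by auto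
  then have "emp n w x \<ge> eps" by (simp add: Gam_def)
  then have "0 < emp n w x" using e by simp
  also have "emp n w x \<le> (\<Sum>y\<in>Gam n w eps. emp n w y)"
    by (rule member_le_sum[OF x]) (auto simp: emp_nonneg Gam_finite[OF e])
  finally show ?thesis .
qed

lemma entropy_cond:
  assumes e: "eps > 0" and ne: "Gam n w eps \<noteq> {}"
  shows "entropy_fun b (cond_emp n w eps) =
           - (\<Sum>x\<in>Gam n w eps. cond_emp n w eps x * log b (cond_emp n w eps x))"
proof -
  have Sp: "(\<Sum>y\<in>Gam n w eps. emp n w y) > 0" by (rule S_pos[OF e ne])
  have "{x. cond_emp n w eps x > 0} = Gam n w eps"
  proof safe
    fix x assume "cond_emp n w eps x > 0" then show "x \<in> Gam n w eps"
      by (auto simp: cond_emp_def split: if_splits)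
  next
    fix x assume x: "x \<in> Gam n w eps"
    then have "emp n w x \<ge> eps" by (simp add: Gam_def)
    then show "cond_emp n w eps x > 0" using x Sp e by (simp add: cond_emp_def)
  qed
  then show ?thesis by (simp add: entropy_fun_def Gam_finite[OF e])
qed


lemma gibbs_term:
  fixes p q b :: real assumes b: "b > 1" and p: "p > 0" and q: "q > 0"
  shows "q * (log b p - log b q) \<le> (p - q) / ln b"
proof -
  have lb: "ln b > 0" using b by simp
  have "q * (log b p - log b q) = q * ln (p / q) / ln b"
    using p q by (simp add: log_def ln_div diff_divide_distrib[symmetric] right_diff_distrib)
  also have "\<dots> \<le> q * (p / q - 1) / ln b"
    using p q lb by (intro divide_right_mono mult_left_mono ln_le_minus_one) auto
  also have "\<dots> = (p - q) / ln b" using q lb by (simp add: field_simps)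
  finally show ?thesis .
qed

lemma upper_bound:
  fixes \<mu> :: "'a pmf" and b eps :: real and w :: "nat \<Rightarrow> 'a"
  assumes b: "b > 1" and e: "eps > 0" and ne: "Gam n w eps \<noteq> {}" and pos: "\<And>k. pmf \<mu> (w k) > 0"
  shows "entropy_fun b (cond_emp n w eps) \<le>
           ((\<Sum>k<n. - log b (pmf \<mu> (w k))) / n) / (\<Sum>y\<in>Gam n w eps. emp n w y)"
proof -
  define G where "G = Gam n w eps"
  define S where "S = (\<Sum>y\<in>G. emp n w y)"
  define q where "q = cond_emp n w eps"
  have n: "n > 0" using Gam_nonempty_n[OF e ne] .
  have fG: "finite G" unfolding G_def by (rule Gam_finite[OF e])
  have Sp: "S > 0" unfolding S_def G_def by (rule S_pos[OF e ne])
  have qG: "q x = emp n w x / S" if "x \<in> G" for x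
    using that by (simp add: q_def cond_emp_def G_def S_def)
  have Gsub: "G \<subseteq> w ` {..<n}" unfolding G_def by (rule Gam_sub[OF e])
  have pG: "pmf \<mu> x > 0" if "x \<in> G" for x using that Gsub pos by auto
  have qpos: "q x > 0" if "x \<in> G" for x
  proof -
    have "emp n w x \<ge> eps" using that by (simp add: G_def Gam_def)
    then show ?thesis using that e Sp by (simp add: qG)
  qed
  have sumq: "(\<Sum>x\<in>G. q x) = 1"
    using Sp by (simp add: qG sum_divide_distrib[symmetric] S_def)
  have sump: "(\<Sum>x\<in>G. pmf \<mu> x) \<le> 1"
    using measure_measure_pmf_finite[OF fG, of \<mu>] measure_pmf.prob_le_1[of \<mu> G] by simp
  have lb: "ln b > 0" using b by simp
  have gib: "(\<Sum>x\<in>G. q x * (log b (pmf \<mu> x) - log b (q x))) \<le> 0"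
  proof -
    have "(\<Sum>x\<in>G. q x * (log b (pmf \<mu> x) - log b (q x))) \<le> (\<Sum>x\<in>G. (pmf \<mu> x - q x) / ln b)"
      by (intro sum_mono gibbs_term b pG qpos)
    also have "\<dots> = ((\<Sum>x\<in>G. pmf \<mu> x) - (\<Sum>x\<in>G. q x)) / ln b"
      by (simp add: sum_divide_distrib[symmetric] sum_subtractf)
    also have "\<dots> \<le> 0" using sump sumq lb by (simp add: divide_nonpos_pos)
    finally show ?thesis .
  qed
  have "entropy_fun b (cond_emp n w eps) = - (\<Sum>x\<in>G. q x * log b (q x))"
    unfolding q_def G_def by (rule entropy_cond[OF e ne])
  also have "\<dots> \<le> (\<Sum>x\<in>G. q x * (- log b (pmf \<mu> x)))"
    using gib by (simp add: algebra_simps sum_subtractf sum_negf)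
  also have "\<dots> = (\<Sum>x\<in>G. emp n w x * (- log b (pmf \<mu> x))) / S"
    by (simp add: qG sum_divide_distrib)
  also have "(\<Sum>x\<in>G. emp n w x * (- log b (pmf \<mu> x))) \<le> (\<Sum>x\<in>w ` {..<n}. emp n w x * (- log b (pmf \<mu> x)))"
  proof (rule sum_mono2[OF _ Gsub])
    fix x assume "x \<in> w ` {..<n} - G"
    then have "pmf \<mu> x > 0" "pmf \<mu> x \<le> 1" using pos by (auto simp: pmf_le_1)
    then have "log b (pmf \<mu> x) \<le> 0" using b by simp
    then show "0 \<le> emp n w x * (- log b (pmf \<mu> x))" using emp_nonneg[of n w x] by (simp add: mult_nonneg_nonpos)
  qed simp
  then have "(\<Sum>x\<in>G. emp n w x * (- log b (pmf \<mu> x))) / S \<le> (\<Sum>x\<in>w ` {..<n}. emp n w x * (- log b (pmf \<mu> x))) / S"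
    using Sp by (simp add: divide_right_mono)
  also have "(\<Sum>x\<in>w ` {..<n}. emp n w x * (- log b (pmf \<mu> x))) = (\<Sum>k<n. - log b (pmf \<mu> (w k))) / n"
    by (rule emp_sum[OF n])
  finally show ?thesis by (simp add: S_def G_def)
qed

lemma lower_bound:
  fixes b eps :: real and w :: "nat \<Rightarrow> 'a"
  assumes b: "b > 1" and e: "eps > 0" and ne: "Gam n w eps \<noteq> {}" and F: "F \<subseteq> Gam n w eps"
  shows "- (\<Sum>x\<in>F. cond_emp n w eps x * log b (cond_emp n w eps x)) \<le> entropy_fun b (cond_emp n w eps)"
proof -
  define G where "G = Gam n w eps"
  define q where "q = cond_emp n w eps"
  have fG: "finite G" unfolding G_def by (rule Gam_finite[OF e])
  have Sp: "(\<Sum>y\<in>G. emp n w y) > 0" unfolding G_def by (rule S_pos[OF e ne])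
  have t0: "0 \<le> - (q x * log b (q x))" if "x \<in> G" for x
  proof -
    have "emp n w x \<le> (\<Sum>y\<in>G. emp n w y)"
      by (rule member_le_sum[OF that]) (auto simp: emp_nonneg fG)
    then have q1: "q x \<le> 1" using that Sp by (simp add: q_def cond_emp_def G_def)
    have q0: "0 \<le> q x" using Sp emp_nonneg[of n w x] by (simp add: q_def cond_emp_def G_def)
    show ?thesis
    proof (cases "q x = 0")
      case False
      then have "log b (q x) \<le> 0" using q0 q1 b by simp
      then show ?thesis using q0 by (simp add: mult_nonneg_nonpos)
    qed simp
  qed
  have "- (\<Sum>x\<in>F. q x * log b (q x)) = (\<Sum>x\<in>F. - (q x * log b (q x)))" by (simp add: sum_negf)
  also have "\<dots> \<le> (\<Sum>x\<in>G. - (q x * log b (q x)))"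
    by (rule sum_mono2[OF fG]) (use F t0 in \<open>auto simp: G_def\<close>)
  also have "\<dots> = entropy_fun b (cond_emp n w eps)"
    by (simp add: entropy_cond[OF e ne] q_def G_def sum_negf)
  finally show ?thesis by (simp add: q_def)
qed


lemma det_conv:
  fixes \<mu> :: "'a::countable pmf" and b H :: real and eps :: "nat \<Rightarrow> real" and w :: "nat \<Rightarrow> 'a"
  assumes b: "b > 1" and eps_pos: "\<And>n. eps n > 0" and eps0: "eps \<longlonglongrightarrow> 0"
    and pos: "\<And>k. pmf \<mu> (w k) > 0"
    and freq: "\<And>x. (\<lambda>n. emp n w x) \<longlonglongrightarrow> pmf \<mu> x"
    and avg: "\<And>\<eta>. \<eta> > 0 \<Longrightarrow> eventually (\<lambda>n. (\<Sum>k<n. - log b (pmf \<mu> (w k))) \<le> n * (H + \<eta>)) sequentially"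
    and sH: "(\<lambda>x. pmf \<mu> x * log b (pmf \<mu> x)) summable_on {x. pmf \<mu> x > 0}"
    and H: "H = - infsum (\<lambda>x. pmf \<mu> x * log b (pmf \<mu> x)) {x. pmf \<mu> x > 0}"
  shows "(\<lambda>n. entropy_fun b (cond_emp n w (eps n))) \<longlonglongrightarrow> H"
    and "eventually (\<lambda>n. Gam n w (eps n) \<noteq> {}) sequentially"
proof -
  define A where "A = {x. pmf \<mu> x > 0}"
  define G where "G n = Gam n w (eps n)" for n
  define S where "S n = (\<Sum>y\<in>G n. emp n w y)" for n
  define V where "V n = entropy_fun b (cond_emp n w (eps n))" for n
  have HF: "eventually (\<lambda>n. F \<subseteq> G n) sequentially" if F: "finite F" "F \<subseteq> A" for F
  proof -
    have "eventually (\<lambda>n. \<forall>x\<in>F. emp n w x \<ge> eps n) sequentially"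
    proof (rule eventually_ball_finite[OF F(1)], intro ballI)
      fix x assume x: "x \<in> F"
      then have px: "pmf \<mu> x > 0" using F by (auto simp: A_def)
      have "eventually (\<lambda>n. emp n w x > pmf \<mu> x / 2) sequentially"
        by (rule order_tendstoD(1)[OF freq]) (use px in simp)
      moreover have "eventually (\<lambda>n. eps n < pmf \<mu> x / 2) sequentially"
        by (rule order_tendstoD(2)[OF eps0]) (use px in simp)
      ultimately show "eventually (\<lambda>n. emp n w x \<ge> eps n) sequentially"
        by eventually_elim simp
    qed
    then show ?thesis by (rule eventually_mono) (auto simp: G_def Gam_def)
  qed
  obtain x0 where x0: "x0 \<in> set_pmf \<mu>" using set_pmf_not_empty[of \<mu>] by blast
  then have x0A: "x0 \<in> A" by (simp add: A_def set_pmf_iff pmf_positive)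
  show NE: "eventually (\<lambda>n. Gam n w (eps n) \<noteq> {}) sequentially"
    using HF[of "{x0}"] x0A by (auto simp: G_def elim!: eventually_mono)
  have NE': "eventually (\<lambda>n. G n \<noteq> {}) sequentially" using NE by (simp add: G_def)
  have S1: "S \<longlonglongrightarrow> 1"
    unfolding tendsto_iff
  proof (intro allI impI)
    fix \<theta> :: real assume th: "\<theta> > 0"
    obtain F where F: "finite F" "F \<subseteq> A" "dist (sum (pmf \<mu>) F) (infsum (pmf \<mu>) A) \<le> \<theta> / 2"
      using infsum_finite_approximation[OF pmf_mass_summable(1)[of \<mu>], of "\<theta>/2"] th
      by (auto simp: A_def)
    have sF: "sum (pmf \<mu>) F \<ge> 1 - \<theta> / 2"
      using F(3) pmf_mass_summable(2)[of \<mu>] unfolding A_def dist_real_def by (smt (verit))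
    have "((\<lambda>n. \<Sum>x\<in>F. emp n w x) \<longlongrightarrow> (\<Sum>x\<in>F. pmf \<mu> x)) sequentially"
      by (intro tendsto_sum freq)
    then have ev: "eventually (\<lambda>n. (\<Sum>x\<in>F. emp n w x) > (\<Sum>x\<in>F. pmf \<mu> x) - \<theta> / 2) sequentially"
      by (rule order_tendstoD(1)) (use th in simp)
    show "eventually (\<lambda>n. dist (S n) 1 < \<theta>) sequentially"
      using ev HF[OF F(1,2)] eventually_gt_at_top[of 0]
    proof eventually_elim
      case (elim n)
      have "(\<Sum>x\<in>F. emp n w x) \<le> S n"
        unfolding S_def by (rule sum_mono2) (use elim eps_pos in \<open>auto simp: G_def Gam_finite emp_nonneg\<close>)
      moreover have "S n \<le> 1" unfolding S_def G_def using S_le1[OF eps_pos] elim by simp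
      ultimately show ?case using elim sF th by (simp add: dist_real_def abs_less_iff)
    qed
  qed
  have Spos: "eventually (\<lambda>n. S n > 0) sequentially"
    using NE' by (rule eventually_mono) (simp add: S_def G_def S_pos[OF eps_pos])
  have UP: "eventually (\<lambda>n. V n < H + \<epsilon>) sequentially" if ep: "\<epsilon> > 0" for \<epsilon>
  proof -
    have "((\<lambda>n. (H + \<epsilon>/2) / S n) \<longlongrightarrow> (H + \<epsilon>/2) / 1) sequentially"
      by (intro tendsto_divide tendsto_const S1) simp
    then have ev: "eventually (\<lambda>n. (H + \<epsilon>/2) / S n < H + \<epsilon>) sequentially"
      by (rule order_tendstoD(2)) (use ep in simp)
    have av: "eventually (\<lambda>n. (\<Sum>k<n. - log b (pmf \<mu> (w k))) \<le> n * (H + \<epsilon>/2)) sequentially"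
      using ep by (intro avg) simp
    show ?thesis using ev NE' Spos av eventually_gt_at_top[of 0]
    proof eventually_elim
      case (elim n)
      have "V n \<le> ((\<Sum>k<n. - log b (pmf \<mu> (w k))) / n) / S n"
        unfolding V_def S_def G_def using upper_bound[OF b eps_pos _ pos] elim by (simp add: G_def)
      also have "\<dots> \<le> (H + \<epsilon>/2) / S n"
        using elim by (intro divide_right_mono) (auto simp: field_simps)
      finally show ?case using elim by simp
    qed
  qed
  have LO: "eventually (\<lambda>n. V n > H - \<epsilon>) sequentially" if ep: "\<epsilon> > 0" for \<epsilon>
  proof -
    obtain F where F: "finite F" "F \<subseteq> A"
      "dist (\<Sum>x\<in>F. pmf \<mu> x * log b (pmf \<mu> x)) (infsum (\<lambda>x. pmf \<mu> x * log b (pmf \<mu> x)) A) \<le> \<epsilon> / 2"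
      using infsum_finite_approximation[OF sH, of "\<epsilon>/2"] ep by (auto simp: A_def)
    have hF: "- (\<Sum>x\<in>F. pmf \<mu> x * log b (pmf \<mu> x)) \<ge> H - \<epsilon> / 2"
      using F(3) unfolding H A_def dist_real_def by (smt (verit))
    have FA: "pmf \<mu> x > 0" if "x \<in> F" for x using that F by (auto simp: A_def)
    have "((\<lambda>n. - (\<Sum>x\<in>F. (emp n w x / S n) * log b (emp n w x / S n)))
          \<longlongrightarrow> - (\<Sum>x\<in>F. (pmf \<mu> x / 1) * log b (pmf \<mu> x / 1))) sequentially"
      using b FA by (intro tendsto_minus tendsto_sum tendsto_mult tendsto_log tendsto_divide freq S1 tendsto_const)
        (auto dest: FA)
    then have ev: "eventually (\<lambda>n. - (\<Sum>x\<in>F. (emp n w x / S n) * log b (emp n w x / S n)) > H - \<epsilon>) sequentially"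
      by (rule order_tendstoD(1)) (use hF ep in simp)
    show ?thesis using ev HF[OF F(1,2)] NE'
    proof eventually_elim
      case (elim n)
      have "- (\<Sum>x\<in>F. (emp n w x / S n) * log b (emp n w x / S n))
              = - (\<Sum>x\<in>F. cond_emp n w (eps n) x * log b (cond_emp n w (eps n) x))"
        using elim by (intro arg_cong[where f=uminus] sum.cong refl) (auto simp: cond_emp_def S_def G_def)
      also have "\<dots> \<le> V n"
        unfolding V_def by (rule lower_bound[OF b eps_pos]) (use elim in \<open>auto simp: G_def\<close>)
      finally show ?case using elim by simp
    qed
  qed
  show "(\<lambda>n. entropy_fun b (cond_emp n w (eps n))) \<longlonglongrightarrow> H"
    unfolding tendsto_iff V_def[symmetric]
  proof (intro allI impI)
    fix \<epsilon> :: real assume "\<epsilon> > 0"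
    then have "eventually (\<lambda>n. V n < H + \<epsilon> \<and> V n > H - \<epsilon>) sequentially"
      using UP LO by (intro eventually_conj) auto
    then show "eventually (\<lambda>n. dist (V n) H < \<epsilon>) sequentially"
      by (rule eventually_mono) (auto simp: dist_real_def abs_less_iff)
  qed
qed


lemma eps_to_0:
  fixes eps :: "nat \<Rightarrow> real" and \<tau> :: real
  assumes tau: "0 < \<tau>" and eps_O: "eps \<in> O(\<lambda>n. real n powr (- \<tau>))"
  shows "eps \<longlonglongrightarrow> 0"
proof -
  have "((\<lambda>n. real n powr (- \<tau>) / 1) \<longlongrightarrow> 0) sequentially"
    using tendsto_neg_powr[OF _ filterlim_real_sequentially, of "-\<tau>"] tau by simp
  then have "(\<lambda>n. real n powr (- \<tau>)) \<in> o(\<lambda>_. 1)"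
    by (rule smalloI_tendsto) simp
  then have "eps \<in> o(\<lambda>_. 1)" by (rule landau_o.big_small_trans[OF eps_O])
  from smalloD_tendsto[OF this] show ?thesis by simp
qed

lemma entropy_integrable:
  fixes \<mu> :: "'a::countable pmf" and b :: real
  assumes b: "b > 1"
    and fin: "(\<lambda>x. pmf \<mu> x * log b (pmf \<mu> x)) summable_on {x. pmf \<mu> x > 0}"
  defines "g \<equiv> \<lambda>x. if pmf \<mu> x > 0 then - log b (pmf \<mu> x) else 0"
  shows "\<And>x. 0 \<le> g x" "integrable (measure_pmf \<mu>) g"
    "(\<integral>x. g x \<partial>measure_pmf \<mu>) = entropy_fun b (pmf \<mu>)"
proof -
  show g0: "0 \<le> g x" for x
  proof (cases "pmf \<mu> x > 0")
    case True
    then have "log b (pmf \<mu> x) \<le> 0" using b pmf_le_1[of \<mu> x] by simp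
    then show ?thesis using True by (simp add: g_def)
  qed (simp add: g_def)
  have eq: "(\<lambda>x. pmf \<mu> x * g x) summable_on UNIV \<longleftrightarrow>
      (\<lambda>x. - (pmf \<mu> x * log b (pmf \<mu> x))) summable_on {x. pmf \<mu> x > 0}"
    by (rule summable_on_cong_neutral) (auto simp: g_def)
  have "(\<lambda>x. - (pmf \<mu> x * log b (pmf \<mu> x))) summable_on {x. pmf \<mu> x > 0}"
    using fin by (subst summable_on_uminus)
  then have sm: "(\<lambda>x. pmf \<mu> x * g x) summable_on UNIV"
    using eq by (rule iffD2[rotated])
  show "integrable (measure_pmf \<mu>) g" by (rule pmf_integrable_summable(1)[OF g0 sm])
  have "(\<integral>x. g x \<partial>measure_pmf \<mu>) = infsum (\<lambda>x. pmf \<mu> x * g x) UNIV"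
    by (rule pmf_integrable_summable(2)[OF g0 sm])
  also have "\<dots> = infsum (\<lambda>x. - (pmf \<mu> x * log b (pmf \<mu> x))) {x. pmf \<mu> x > 0}"
    by (rule infsum_cong_neutral) (auto simp: g_def)
  also have "\<dots> = entropy_fun b (pmf \<mu>)" by (simp add: infsum_uminus entropy_fun_def)
  finally show "(\<integral>x. g x \<partial>measure_pmf \<mu>) = entropy_fun b (pmf \<mu>)" .
qed


theorem theorem4:
  fixes \<mu> :: "'a :: countable pmf" and b \<tau> :: real and eps :: "nat \<Rightarrow> real"
    and dflt :: "nat \<Rightarrow> (nat \<Rightarrow> 'a) \<Rightarrow> real"
  assumes inf: "infinite (UNIV :: 'a set)"
    and b: "b > 1"
    and eps_pos: "\<And>n. eps n > 0"
    and tau: "0 < \<tau>" "\<tau> < 1"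
    and eps_O: "eps \<in> O(\<lambda>n. real n powr (- \<tau>))"
    and fin: "(\<lambda>x. pmf \<mu> x * log b (pmf \<mu> x)) summable_on {x. pmf \<mu> x > 0}"
  shows "AE w in (\<Pi>\<^sub>M i\<in>(UNIV :: nat set). measure_pmf \<mu>).
           (\<lambda>n. if Gam n w (eps n) = {} then dflt n w
                 else entropy_fun b (cond_emp n w (eps n)))
           \<longlonglongrightarrow> entropy_fun b (pmf \<mu>)"
proof -
  interpret iidseq \<mu> .
  define g where "g = (\<lambda>x. if pmf \<mu> x > 0 then - log b (pmf \<mu> x) else 0)"
  define H where "H = entropy_fun b (pmf \<mu>)"
  have g0: "\<And>x. 0 \<le> g x" and ig: "integrable (measure_pmf \<mu>) g"
    and Eg: "(\<integral>x. g x \<partial>measure_pmf \<mu>) = H"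
    using entropy_integrable[OF b fin] by (simp_all add: g_def H_def)
  have eps0: "eps \<longlonglongrightarrow> 0" by (rule eps_to_0[OF tau(1) eps_O])
  have supp: "AE w in M. \<forall>k. pmf \<mu> (w k) > 0"
  proof (subst AE_all_countable, intro allI)
    fix k :: nat
    have "AE x in measure_pmf \<mu>. pmf \<mu> x > 0"
      by (simp add: AE_measure_pmf_iff set_pmf_iff pmf_positive)
    then show "AE w in M. pmf \<mu> (w k) > 0" by (rule AE_PiM_component[rotated 2]) (auto intro: prob_space_measure_pmf)
  qed
  have sl: "AE w in M. \<forall>\<eta>>0. eventually (\<lambda>n. (\<Sum>k<n. g (w k)) \<le> n * (H + \<eta>)) sequentially"
    using slln_upper[OF g0 ig] by (simp add: Eg)
  show ?thesis using supp freq_conv sl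
  proof eventually_elim
    case (elim w)
    have pos: "\<And>k. pmf \<mu> (w k) > 0" using elim(1) by blast
    have freq: "\<And>x. (\<lambda>n. emp n w x) \<longlonglongrightarrow> pmf \<mu> x" using elim(2) by blast
    have slw: "\<forall>\<eta>>0. eventually (\<lambda>n. (\<Sum>k<n. g (w k)) \<le> n * (H + \<eta>)) sequentially"
      using elim(3) .
    have gw: "g (w k) = - log b (pmf \<mu> (w k))" for k using pos[of k] by (simp add: g_def)
    have sumeq: "(\<Sum>k<n. g (w k)) = (\<Sum>k<n. - log b (pmf \<mu> (w k)))" for n
      by (rule sum.cong[OF refl]) (rule gw)
    have avg: "eventually (\<lambda>n. (\<Sum>k<n. - log b (pmf \<mu> (w k))) \<le> n * (H + \<eta>)) sequentially"
      if "\<eta> > 0" for \<eta> using slw that unfolding sumeq by blast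
    have Hdef: "H = - infsum (\<lambda>x. pmf \<mu> x * log b (pmf \<mu> x)) {x. pmf \<mu> x > 0}"
      by (simp add: H_def entropy_fun_def)
    note dc = det_conv[OF b eps_pos eps0 pos freq avg fin Hdef]
    have lim: "(\<lambda>n. entropy_fun b (cond_emp n w (eps n))) \<longlonglongrightarrow> H"
      by (rule dc(1))
    have ne: "eventually (\<lambda>n. Gam n w (eps n) \<noteq> {}) sequentially"
      by (rule dc(2))
    have "eventually (\<lambda>n. entropy_fun b (cond_emp n w (eps n)) =
        (if Gam n w (eps n) = {} then dflt n w else entropy_fun b (cond_emp n w (eps n)))) sequentially"
      using ne by (rule eventually_mono) simp
    from Lim_transform_eventually[OF lim this] show ?case by (simp add: H_def)
  qed
qed


end
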